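(* Let $S$ be a finite set, $f:S\to\mathbb{R}$ a fitness function to be maximized, $S_{\mathrm{opt}}$ the set of maximizers of $f$ and $S_{\mathrm{non}}=S\setminus S_{\mathrm{opt}}$ (assumed nonempty). Let $s1,s2$ be mutation operators on $S$ such that $s2$ is complementary to $s1$ on $f$, i.e. for every $x\in S_{\mathrm{non}}$ with $P_{s1}(x,x)=\rho(\mathbf{T}_{s1})$ it holds that $P_{s2}(x,x)<\rho(\mathbf{T}_{s1})$. Then there exists a strategy probability distribution $\mathbf{q}$ over $\{s1,s2\}$ such that the homogeneous mixed strategy (1+1) EA(s1,s2) with distribution $\mathbf{q}$ satisfies $R(\mathbf{T}_{\mathbf{q}})>R(\mathbf{T}_{s1})$ and $T(\mathbf{T}_{\mathbf{q}})<T(\mathbf{T}_{s1})$; i.e. its asymptotic convergence rate is larger and its asymptotic hitting time is shorter than those of the pure strategy EA(s1).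
   Context: A mutation operator $s$ on the finite set $S$ is a stochastic matrix $\mathbf{P}_{m,s}=[P_{m,s}(x,y)]_{x,y\in S}$ (probability that mutating $x$ yields $y$). Strict elitist selection between parent $x$ and offspring $y$ keeps $y$ if $f(y)>f(x)$ and keeps $x$ otherwise. The pure strategy (1+1) EA EA($s$) repeatedly mutates the current individual by $s$ and applies strict elitist selection; it is a homogeneous Markov chain on $S$ with transition probabilities $P_s(x,y)=P_{m,s}(x,y)$ if $f(y)>f(x)$, $P_s(x,y)=0$ if $y\neq x$ and $f(y)\le f(x)$, and $P_s(x,x)=1-\sum_{y:\,f(y)>f(x)}P_{m,s}(x,y)$. A (state-dependent) strategy probability distribution over operators $s1,\dots,s\kappa$ is a map $x\mapsto \mathbf{q}(x)=(q_{s1}(x),\dots,q_{s\kappa}(x))$ with $q_{sk}(x)\in[0,1]$ and $\sum_k q_{sk}(x)=1$. The homogeneous mixed strategy (1+1) EA with distribution $\mathbf{q}$ at each generation, with current individual $x$, chooses operator $sk$ with probability $q_{sk}(x)$, mutates $x$ by it, and applies strict elitist selection; its transition matrix is $P_{\mathbf{q}}(x,y)=\sum_{k}q_{sk}(x)P_{sk}(x,y)$. For such an EA with transition matrix $\mathbf{P}$, let $\mathbf{T}$ denote the submatrix $[P(x,y)]_{x,y\in S_{\mathrm{non}}}$ and $\rho(\mathbf{T})$ its spectral radius. The asymptotic convergence rate is $R(\mathbf{T})=-\ln\rho(\mathbf{T})$ (with $-\ln 0=+\infty$). The asymptotic hitting time is $T(\mathbf{T})=\rho((\mathbf{I}-\mathbf{T})^{-1})$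 if $\rho(\mathbf{T})<1$ and $T(\mathbf{T})=+\infty$ if $\rho(\mathbf{T})=1$. Subscripts $\mathbf{q}$ and $s$ indicate the matrices of the mixed strategy EA and of the pure strategy EA($s$), respectively. *)

theory Defs
  imports Complex_Main "HOL-Library.Extended_Real"
begin

text \<open>The search space S is the finite type 'a (S = UNIV). Matrices are functions
  'a \<Rightarrow> 'a \<Rightarrow> real.\<close>

definition S_opt :: "('a \<Rightarrow> real) \<Rightarrow> 'a set" where
  "S_opt f = {x. \<forall>y. f y \<le> f x}"

definition S_non :: "('a \<Rightarrow> real) \<Rightarrow> 'a set" where
  "S_non f = UNIV - S_opt f"

definition mutation_operator :: "('a::finite \<Rightarrow> 'a \<Rightarrow> real) \<Rightarrow> bool" where
  "mutation_operator Pm \<longleftrightarrow> (\<forall>x y. 0 \<le> Pm x y) \<and> (\<forall>x. (\<Sum>y\<in>UNIV. Pm x y) = 1)"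

text \<open>Transition matrix of the pure strategy (1+1) EA with strict elitist selection.\<close>
definition ea_trans :: "('a::finite \<Rightarrow> real) \<Rightarrow> ('a \<Rightarrow> 'a \<Rightarrow> real) \<Rightarrow> 'a \<Rightarrow> 'a \<Rightarrow> real" where
  "ea_trans f Pm x y =
     (if y = x then 1 - (\<Sum>z\<in>{z. f z > f x}. Pm x z)
      else if f y > f x then Pm x y else 0)"

definition mixed_trans ::
  "('a \<Rightarrow> real) \<Rightarrow> ('a \<Rightarrow> real) \<Rightarrow> ('a \<Rightarrow> 'a \<Rightarrow> real) \<Rightarrow> ('a \<Rightarrow> 'a \<Rightarrow> real) \<Rightarrow> 'a \<Rightarrow> 'a \<Rightarrow> real" where
  "mixed_trans q1 q2 P1 P2 x y = q1 x * P1 x y + q2 x * P2 x y"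

definition strategy_distribution :: "('a \<Rightarrow> real) \<Rightarrow> ('a \<Rightarrow> real) \<Rightarrow> bool" where
  "strategy_distribution q1 q2 \<longleftrightarrow>
     (\<forall>x. 0 \<le> q1 x \<and> q1 x \<le> 1 \<and> 0 \<le> q2 x \<and> q2 x \<le> 1 \<and> q1 x + q2 x = 1)"

definition sub_eigenvalue :: "'a set \<Rightarrow> ('a \<Rightarrow> 'a \<Rightarrow> real) \<Rightarrow> complex \<Rightarrow> bool" where
  "sub_eigenvalue A M c \<longleftrightarrow>
     (\<exists>v :: 'a \<Rightarrow> complex. (\<exists>x\<in>A. v x \<noteq> 0) \<and>
        (\<forall>x\<in>A. (\<Sum>y\<in>A. complex_of_real (M x y) * v y) = c * v x))"

definition spec_rad :: "'a set \<Rightarrow> ('a \<Rightarrow> 'a \<Rightarrow> real) \<Rightarrow> real" where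
  "spec_rad A M = Max (cmod ` {c. sub_eigenvalue A M c})"

definition sub_inv_I_minus :: "'a set \<Rightarrow> ('a \<Rightarrow> 'a \<Rightarrow> real) \<Rightarrow> 'a \<Rightarrow> 'a \<Rightarrow> real" where
  "sub_inv_I_minus A M = (SOME N. \<forall>x\<in>A. \<forall>y\<in>A.
      (\<Sum>z\<in>A. ((if x = z then 1 else 0) - M x z) * N z y) = (if x = y then 1 else 0))"

definition conv_rate :: "'a set \<Rightarrow> ('a \<Rightarrow> 'a \<Rightarrow> real) \<Rightarrow> ereal" where
  "conv_rate A M = (if spec_rad A M = 0 then \<infinity> else ereal (- ln (spec_rad A M)))"

definition hitting_time :: "'a set \<Rightarrow> ('a \<Rightarrow> 'a \<Rightarrow> real) \<Rightarrow> ereal" where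
  "hitting_time A M = (if spec_rad A M < 1 then ereal (spec_rad A (sub_inv_I_minus A M)) else \<infinity>)"

end

theory Submission
  imports Defs
begin

definition tri :: "('a \<Rightarrow> real) \<Rightarrow> 'a set \<Rightarrow> ('a \<Rightarrow> 'a \<Rightarrow> real) \<Rightarrow> bool" where
  "tri f A M \<longleftrightarrow> (\<forall>x\<in>A. \<forall>y\<in>A. x \<noteq> y \<and> M x y \<noteq> 0 \<longrightarrow> f x < f y)"

lemma ex_min_on:
  fixes f :: "'a \<Rightarrow> real"
  assumes "finite B" "B \<noteq> {}"
  shows "\<exists>x\<in>B. \<forall>y\<in>B. f x \<le> f y"
proof -
  have "Min (f ` B) \<in> f ` B" using assms by simp
  then obtain x where "x \<in> B" "f x = Min (f ` B)" by auto
  moreover have "\<forall>y\<in>B. Min (f ` B) \<le> f y" using assms by simp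
  ultimately show ?thesis by metis
qed

lemma ex_max_on:
  fixes f :: "'a \<Rightarrow> real"
  assumes "finite B" "B \<noteq> {}"
  shows "\<exists>x\<in>B. \<forall>y\<in>B. f y \<le> f x"
proof -
  have "Max (f ` B) \<in> f ` B" using assms by simp
  then obtain x where "x \<in> B" "f x = Max (f ` B)" by auto
  moreover have "\<forall>y\<in>B. f y \<le> Max (f ` B)" using assms by simp
  ultimately show ?thesis by metis
qed

lemma sum_single:
  assumes "finite A" "x \<in> A" "\<forall>z\<in>A. z \<noteq> x \<longrightarrow> g z = 0"
  shows "sum g A = g x"
proof -
  have "sum g A = g x + sum g (A - {x})" using assms sum.remove by metis
  also have "sum g (A - {x}) = 0" using assms by (intro sum.neutral) auto
  finally show ?thesis by simp
qed

lemma tri_subset: "tri f A M \<Longrightarrow> B \<subseteq> A \<Longrightarrow> tri f B M"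
  unfolding tri_def by blast

lemma solve_tri:
  fixes M :: "'a \<Rightarrow> 'a \<Rightarrow> real"
  assumes "finite A" "tri f A M" "\<forall>x\<in>A. M x x \<noteq> c"
  shows "\<exists>w. \<forall>x\<in>A. (\<Sum>z\<in>A. M x z * w z) - c * w x = b x"
  using assms
proof (induction "card A" arbitrary: A rule: less_induct)
  case less
  show ?case
  proof (cases "A = {}")
    case True then show ?thesis by simp
  next
    case False
    obtain m where m: "m \<in> A" "\<forall>y\<in>A. f m \<le> f y" using ex_min_on[OF less.prems(1) False] by blast
    define A' where "A' = A - {m}"
    have cA: "card A' < card A" unfolding A'_def using m(1) less.prems(1)
      by (metis card_Diff1_less)
    obtain w' where w': "\<forall>x\<in>A'. (\<Sum>z\<in>A'. M x z * w' z) - c * w' x = b x"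
      using less.hyps[OF cA] less.prems tri_subset[of f A M A'] unfolding A'_def by auto
    define w where "w = w'(m := (b m - (\<Sum>z\<in>A'. M m z * w' z)) / (M m m - c))"
    have zero: "M x m = 0" if "x \<in> A" "x \<noteq> m" for x
      using less.prems(2) m that unfolding tri_def by force
    have sA': "(\<Sum>z\<in>A'. M x z * w z) = (\<Sum>z\<in>A'. M x z * w' z)" for x
      unfolding w_def A'_def by (intro sum.cong) auto
    have split: "(\<Sum>z\<in>A. M x z * w z) = M x m * w m + (\<Sum>z\<in>A'. M x z * w' z)" for x
      using sum.remove[OF less.prems(1) m(1), of "\<lambda>z. M x z * w z"] sA'[of x]
      unfolding A'_def by simp
    have "\<forall>x\<in>A. (\<Sum>z\<in>A. M x z * w z) - c * w x = b x"
    proof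
      fix x assume x: "x \<in> A"
      show "(\<Sum>z\<in>A. M x z * w z) - c * w x = b x"
      proof (cases "x = m")
        case True
        have ne: "M m m - c \<noteq> 0" using less.prems(3) m by auto
        have "w m = (b m - (\<Sum>z\<in>A'. M m z * w' z)) / (M m m - c)" unfolding w_def by simp
        then have "(M m m - c) * w m = b m - (\<Sum>z\<in>A'. M m z * w' z)" using ne by simp
        then show ?thesis using split[of m] True by (simp add: algebra_simps)
      next
        case False
        then have "x \<in> A'" using x unfolding A'_def by auto
        moreover have "w x = w' x" using False unfolding w_def by simp
        ultimately show ?thesis using split[of x] zero[OF x False] w' by simp
      qed
    qed
    then show ?thesis by blast
  qed
qed

lemma eig_diag:
  assumes "finite A" "tri f A M" "sub_eigenvalue A M c"
  shows "\<exists>x\<in>A. c = complex_of_real (M x x)"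
proof -
  obtain v where v: "\<exists>x\<in>A. v x \<noteq> 0" "\<forall>x\<in>A. (\<Sum>y\<in>A. complex_of_real (M x y) * v y) = c * v x"
    using assms(3) unfolding sub_eigenvalue_def by blast
  define W where "W = {x\<in>A. v x \<noteq> 0}"
  have "finite W" "W \<noteq> {}" using assms(1) v(1) unfolding W_def by auto
  then obtain x where x: "x \<in> W" "\<forall>y\<in>W. f y \<le> f x" using ex_max_on by blast
  have xA: "x \<in> A" "v x \<noteq> 0" using x(1) unfolding W_def by auto
  have "(\<Sum>y\<in>A. complex_of_real (M x y) * v y) = complex_of_real (M x x) * v x"
  proof (rule sum_single[OF assms(1) xA(1)], intro ballI impI)
    fix z assume z: "z \<in> A" "z \<noteq> x"
    show "complex_of_real (M x z) * v z = 0"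
    proof (cases "M x z = 0")
      case False
      then have "f x < f z" using assms(2) z xA unfolding tri_def by auto
      then have "v z = 0" using x(2) z unfolding W_def by force
      then show ?thesis by simp
    qed simp
  qed
  then have "c * v x = complex_of_real (M x x) * v x" using v(2) xA by simp
  then show ?thesis using xA by auto
qed

lemma real_eig:
  fixes v :: "'a \<Rightarrow> real"
  assumes "x0 \<in> A" "v x0 \<noteq> 0" "\<forall>x\<in>A. (\<Sum>y\<in>A. M x y * v y) = d * v x"
  shows "sub_eigenvalue A M (complex_of_real d)"
  unfolding sub_eigenvalue_def
proof (intro exI[of _ "\<lambda>y. complex_of_real (v y)"] conjI ballI)
  show "\<exists>x\<in>A. complex_of_real (v x) \<noteq> 0" using assms by auto
  fix x assume "x \<in> A"
  have "(\<Sum>y\<in>A. complex_of_real (M x y) * complex_of_real (v y)) = complex_of_real (\<Sum>y\<in>A. M x y * v y)"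
    by simp
  also have "\<dots> = complex_of_real d * complex_of_real (v x)" using assms(3) \<open>x \<in> A\<close> by simp
  finally show "(\<Sum>y\<in>A. complex_of_real (M x y) * complex_of_real (v y)) = complex_of_real d * complex_of_real (v x)" .
qed

lemma diag_eig_aux:
  fixes M :: "'a \<Rightarrow> 'a \<Rightarrow> real"
  assumes fin: "finite A" and tr: "tri f A M" and x1: "x1 \<in> A"
    and low: "\<forall>y\<in>A. f y < f x1 \<longrightarrow> M y y \<noteq> M x1 x1"
  shows "sub_eigenvalue A M (complex_of_real (M x1 x1))"
proof -
  define d where "d = M x1 x1"
  define A' where "A' = {y\<in>A. f y < f x1}"
  have fA': "finite A'" "A' \<subseteq> A" using fin unfolding A'_def by auto
  obtain w where w: "\<forall>x\<in>A'. (\<Sum>z\<in>A'. M x z * w z) - d * w x = - M x x1"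
    using solve_tri[OF fA'(1) tri_subset[OF tr fA'(2)], of d "\<lambda>x. - M x x1"] low
    unfolding A'_def d_def by auto
  define v where "v y = (if y \<in> A' then w y else if y = x1 then 1 else 0)" for y
  have x1A': "x1 \<notin> A'" unfolding A'_def by auto
  have sumeq: "(\<Sum>z\<in>A. M y z * v z) = (\<Sum>z\<in>A'. M y z * w z) + M y x1" for y
  proof -
    have "(\<Sum>z\<in>A. M y z * v z) = (\<Sum>z\<in>insert x1 A'. M y z * v z)"
      using fin fA'(2) x1 by (intro sum.mono_neutral_right) (auto simp: v_def)
    also have "\<dots> = M y x1 * v x1 + (\<Sum>z\<in>A'. M y z * v z)"
      using fA'(1) x1A' by simp
    also have "(\<Sum>z\<in>A'. M y z * v z) = (\<Sum>z\<in>A'. M y z * w z)"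
      by (intro sum.cong) (auto simp: v_def)
    finally show ?thesis using x1A' by (simp add: v_def)
  qed
  have "\<forall>y\<in>A. (\<Sum>z\<in>A. M y z * v z) = d * v y"
  proof
    fix y assume y: "y \<in> A"
    show "(\<Sum>z\<in>A. M y z * v z) = d * v y"
    proof (cases "y \<in> A'")
      case True
      then show ?thesis using w sumeq[of y] by (auto simp: v_def algebra_simps)
    next
      case False
      have z0: "(\<Sum>z\<in>A'. M y z * w z) = 0"
      proof (intro sum.neutral ballI)
        fix z assume z: "z \<in> A'"
        have "M y z = 0"
        proof (rule ccontr)
          assume "M y z \<noteq> 0"
          moreover have "z \<noteq> y" using z False by auto
          ultimately have "f y < f z" using tr y z fA'(2) unfolding tri_def by auto
          then show False using z False y unfolding A'_def by auto
        qed
        then show "M y z * w z = 0" by simp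
      qed
      show ?thesis
      proof (cases "y = x1")
        case True then show ?thesis using sumeq[of y] z0 x1A' by (simp add: v_def d_def)
      next
        case ne: False
        have "M y x1 = 0"
        proof (rule ccontr)
          assume "M y x1 \<noteq> 0"
          then have "f y < f x1" using tr y x1 ne unfolding tri_def by auto
          then show False using False y unfolding A'_def by auto
        qed
        then show ?thesis using sumeq[of y] z0 False ne by (simp add: v_def)
      qed
    qed
  qed
  then show ?thesis using real_eig[of x1 A v M d] x1 x1A' unfolding d_def v_def by auto
qed

lemma diag_eig:
  fixes M :: "'a \<Rightarrow> 'a \<Rightarrow> real"
  assumes fin: "finite A" and tr: "tri f A M" and x0: "x0 \<in> A"
  shows "sub_eigenvalue A M (complex_of_real (M x0 x0))"
proof -
  define B where "B = {x\<in>A. M x x = M x0 x0}"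
  have "finite B" "B \<noteq> {}" using fin x0 unfolding B_def by auto
  then obtain x1 where x1: "x1 \<in> B" "\<forall>y\<in>B. f x1 \<le> f y" using ex_min_on by blast
  have "sub_eigenvalue A M (complex_of_real (M x1 x1))"
    using x1 unfolding B_def by (intro diag_eig_aux[OF fin tr]) force+
  then show ?thesis using x1 unfolding B_def by auto
qed

lemma spec_rad_tri:
  fixes M :: "'a \<Rightarrow> 'a \<Rightarrow> real"
  assumes "finite A" "tri f A M"
  shows "spec_rad A M = Max ((\<lambda>x. \<bar>M x x\<bar>) ` A)"
proof -
  have "{c. sub_eigenvalue A M c} = (\<lambda>x. complex_of_real (M x x)) ` A"
    using eig_diag[OF assms] diag_eig[OF assms] by blast
  then have "cmod ` {c. sub_eigenvalue A M c} = (\<lambda>x. \<bar>M x x\<bar>) ` A"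
    by (simp add: image_image)
  then show ?thesis unfolding spec_rad_def by simp
qed

lemma delta_sum:
  fixes w :: "'a \<Rightarrow> real"
  assumes "finite A" "x \<in> A"
  shows "(\<Sum>z\<in>A. ((if x = z then 1 else 0) - T x z) * w z) = w x - (\<Sum>z\<in>A. T x z * w z)"
proof -
  have "(\<Sum>z\<in>A. ((if x = z then 1 else 0) - T x z) * w z)
      = (\<Sum>z\<in>A. (if x = z then w z else 0)) - (\<Sum>z\<in>A. T x z * w z)"
  proof -
    have "(\<Sum>z\<in>A. ((if x = z then 1 else 0) - T x z) * w z)
        = (\<Sum>z\<in>A. (if x = z then w z else 0) - T x z * w z)"
      by (intro sum.cong) (auto simp: algebra_simps)
    then show ?thesis by (simp add: sum_subtractf)
  qed
  then show ?thesis using assms by simp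
qed

lemma inv_props:
  fixes T :: "'a \<Rightarrow> 'a \<Rightarrow> real"
  assumes fin: "finite A" and tr: "tri f A T" and d1: "\<forall>x\<in>A. T x x \<noteq> 1"
  shows "tri f A (sub_inv_I_minus A T) \<and> (\<forall>x\<in>A. sub_inv_I_minus A T x x = 1 / (1 - T x x))"
proof -
  define P where "P N \<longleftrightarrow> (\<forall>x\<in>A. \<forall>y\<in>A.
      (\<Sum>z\<in>A. ((if x = z then 1 else 0) - T x z) * N z y) = (if x = y then 1 else 0))" for N
  have "\<forall>y. \<exists>w. \<forall>x\<in>A. (\<Sum>z\<in>A. T x z * w z) - 1 * w x = - (if x = y then 1 else 0)"
  proof
    fix y show "\<exists>w. \<forall>x\<in>A. (\<Sum>z\<in>A. T x z * w z) - 1 * w x = - (if x = y then 1 else 0)"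
      using solve_tri[OF fin tr, of 1 "\<lambda>x. - (if x = y then 1 else 0)"] d1 by simp
  qed
  then have "\<exists>W. \<forall>y. \<forall>x\<in>A. (\<Sum>z\<in>A. T x z * W y z) - 1 * W y x = - (if x = y then 1 else 0)"
    by (rule choice)
  then obtain W where W: "\<forall>y. \<forall>x\<in>A. (\<Sum>z\<in>A. T x z * W y z) - 1 * W y x = - (if x = y then 1 else 0)"
    by blast
  have "P (\<lambda>z y. W y z)" unfolding P_def
  proof (intro ballI)
    fix x y assume "x \<in> A" "y \<in> A"
    then show "(\<Sum>z\<in>A. ((if x = z then 1 else 0) - T x z) * W y z) = (if x = y then 1 else 0)"
    proof -
      have e: "(\<Sum>z\<in>A. T x z * W y z) - 1 * W y x = - (if x = y then 1 else 0)"
        using W \<open>x \<in> A\<close> by blast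
      show ?thesis using delta_sum[OF fin \<open>x \<in> A\<close>, of T "W y"] e by simp
    qed
  qed
  then have PS: "P (SOME N. P N)" by (rule someI[of P])
  have PN: "P (sub_inv_I_minus A T)" using PS unfolding sub_inv_I_minus_def P_def by simp
  define N where "N = sub_inv_I_minus A T"
  have col: "\<forall>x\<in>A. N x y - (\<Sum>z\<in>A. T x z * N z y) = (if x = y then 1 else 0)" if "y \<in> A" for y
    using PN that delta_sum[OF fin, of _ T "\<lambda>z. N z y"] unfolding P_def N_def by force
  have trN: "f x < f y" if xy: "x \<in> A" "y \<in> A" "x \<noteq> y" "N x y \<noteq> 0" for x y
  proof (rule ccontr)
    assume nlt: "\<not> f x < f y"
    define B where "B = {x\<in>A. N x y \<noteq> 0 \<and> x \<noteq> y \<and> f y \<le> f x}"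
    have "finite B" "B \<noteq> {}" using fin xy nlt unfolding B_def by auto
    then obtain u where u: "u \<in> B" "\<forall>z\<in>B. f z \<le> f u" using ex_max_on by blast
    have uA: "u \<in> A" "N u y \<noteq> 0" "u \<noteq> y" "f y \<le> f u" using u(1) unfolding B_def by auto
    have "(\<Sum>z\<in>A. T u z * N z y) = T u u * N u y"
    proof (rule sum_single[OF fin uA(1)], intro ballI impI)
      fix z assume z: "z \<in> A" "z \<noteq> u"
      show "T u z * N z y = 0"
      proof (cases "T u z = 0")
        case False
        then have "f u < f z" using tr z uA unfolding tri_def by auto
        then have "N z y = 0" using u(2) z uA unfolding B_def by force
        then show ?thesis by simp
      qed simp
    qed
    then have "N u y - T u u * N u y = 0" using col[OF xy(2)] uA by auto
    then have "(1 - T u u) * N u y = 0" by (simp add: algebra_simps)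
    then show False using d1 uA by auto
  qed
  have diag: "N y y = 1 / (1 - T y y)" if y: "y \<in> A" for y
  proof -
    have "(\<Sum>z\<in>A. T y z * N z y) = T y y * N y y"
    proof (rule sum_single[OF fin y], intro ballI impI)
      fix z assume z: "z \<in> A" "z \<noteq> y"
      show "T y z * N z y = 0"
      proof (cases "T y z = 0")
        case False
        then have "f y < f z" using tr z y unfolding tri_def by auto
        then have "N z y = 0" using trN[of z y] z y by force
        then show ?thesis by simp
      qed simp
    qed
    then have "(1 - T y y) * N y y = 1" using col[OF y] y by (auto simp: algebra_simps)
    then show ?thesis using d1 y by (simp add: field_simps)
  qed
  show ?thesis using trN diag unfolding N_def tri_def by blast
qed

lemma ea_tri: "tri f A (ea_trans f Pm)"
  unfolding tri_def ea_trans_def by auto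

lemma ea_diag:
  assumes "mutation_operator Pm"
  shows "0 \<le> ea_trans f Pm x x \<and> ea_trans f Pm x x \<le> 1"
proof -
  have nn: "\<forall>x y. 0 \<le> Pm x y" and s: "(\<Sum>y\<in>UNIV. Pm x y) = 1"
    using assms unfolding mutation_operator_def by auto
  have "(\<Sum>z\<in>{z. f z > f x}. Pm x z) \<le> (\<Sum>y\<in>UNIV. Pm x y)"
    using nn by (intro sum_mono2) auto
  moreover have "0 \<le> (\<Sum>z\<in>{z. f z > f x}. Pm x z)" using nn by (intro sum_nonneg) auto
  ultimately show ?thesis using s unfolding ea_trans_def by simp
qed


theorem theorem3:
  fixes f :: "'a::finite \<Rightarrow> real"
    and Pm1 Pm2 :: "'a \<Rightarrow> 'a \<Rightarrow> real"
  assumes nonempty: "S_non f \<noteq> {}"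
    and mut1: "mutation_operator Pm1"
    and mut2: "mutation_operator Pm2"
    and complementary: "\<forall>x\<in>S_non f.
          ea_trans f Pm1 x x = spec_rad (S_non f) (ea_trans f Pm1) \<longrightarrow>
          ea_trans f Pm2 x x < spec_rad (S_non f) (ea_trans f Pm1)"
  shows "\<exists>q1 q2. strategy_distribution q1 q2 \<and>
           conv_rate (S_non f) (mixed_trans q1 q2 (ea_trans f Pm1) (ea_trans f Pm2))
             > conv_rate (S_non f) (ea_trans f Pm1) \<and>
           hitting_time (S_non f) (mixed_trans q1 q2 (ea_trans f Pm1) (ea_trans f Pm2))
             < hitting_time (S_non f) (ea_trans f Pm1)"
proof -
  define A where "A = S_non f"
  define T1 where "T1 = ea_trans f Pm1"
  define T2 where "T2 = ea_trans f Pm2"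
  have fin: "finite A" by simp
  have ne: "A \<noteq> {}" using nonempty unfolding A_def .
  have d1: "0 \<le> T1 x x \<and> T1 x x \<le> 1" for x using ea_diag[OF mut1] unfolding T1_def by blast
  have d2: "0 \<le> T2 x x \<and> T2 x x \<le> 1" for x using ea_diag[OF mut2] unfolding T2_def by blast
  define r1 where "r1 = spec_rad A T1"
  have r1eq: "r1 = Max ((\<lambda>x. \<bar>T1 x x\<bar>) ` A)"
    unfolding r1_def T1_def using spec_rad_tri[OF fin ea_tri] .
  have le1: "T1 x x \<le> r1" if "x \<in> A" for x
  proof -
    have "\<bar>T1 x x\<bar> \<le> r1" using r1eq that fin by simp
    then show ?thesis by simp
  qed
  have "r1 \<in> (\<lambda>x. \<bar>T1 x x\<bar>) ` A" using r1eq fin ne by simp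
  then obtain x0 where x0': "x0 \<in> A" "r1 = \<bar>T1 x0 x0\<bar>" by blast
  have x0: "x0 \<in> A" "T1 x0 x0 = r1" using x0' d1[of x0] by auto
  have r1le: "r1 \<le> 1" using x0(2) d1[of x0] by simp
  define q1 where "q1 x = (if T1 x x = r1 then 0 else (1::real))" for x
  define q2 where "q2 x = 1 - q1 x" for x
  define Tq where "Tq = mixed_trans q1 q2 T1 T2"
  have sd: "strategy_distribution q1 q2"
    unfolding strategy_distribution_def q1_def q2_def by auto
  have Tqd: "Tq x x = (if T1 x x = r1 then T2 x x else T1 x x)" for x
    unfolding Tq_def mixed_trans_def q1_def q2_def by simp
  have comp: "\<forall>x\<in>A. T1 x x = r1 \<longrightarrow> T2 x x < r1"
    using complementary unfolding A_def T1_def T2_def r1_def by blast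
  have lt: "Tq x x < r1" if "x \<in> A" for x
    using comp that le1[OF that] Tqd[of x] by auto
  have nnq: "0 \<le> Tq x x" for x using Tqd[of x] d1[of x] d2[of x] by auto
  have trq: "tri f A Tq"
    unfolding tri_def
  proof (intro ballI impI)
    fix x y assume "x \<in> A" "y \<in> A" and h: "x \<noteq> y \<and> Tq x y \<noteq> 0"
    then have "T1 x y \<noteq> 0 \<or> T2 x y \<noteq> 0" unfolding Tq_def mixed_trans_def by auto
    then show "f x < f y" using h unfolding T1_def T2_def ea_trans_def by (auto split: if_splits)
  qed
  define rq where "rq = spec_rad A Tq"
  have rqeq: "rq = Max ((\<lambda>x. \<bar>Tq x x\<bar>) ` A)"
    unfolding rq_def using spec_rad_tri[OF fin trq] .
  have rqlt: "rq < r1" using rqeq fin ne lt nnq by simp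
  have rqge: "0 \<le> rq" using rqeq fin ne x0(1) nnq
  proof -
    have "\<bar>Tq x0 x0\<bar> \<le> rq" using rqeq fin x0(1) by simp
    then show ?thesis by simp
  qed
  have r1pos: "0 < r1" using rqlt rqge by simp
  have conv: "conv_rate A Tq > conv_rate A T1"
  proof (cases "rq = 0")
    case True
    then show ?thesis using r1pos unfolding conv_rate_def rq_def[symmetric] r1_def[symmetric] by simp
  next
    case False
    then have "ln rq < ln r1" using rqge rqlt by simp
    then show ?thesis using False r1pos unfolding conv_rate_def rq_def[symmetric] r1_def[symmetric] by simp
  qed
  have hit: "hitting_time A Tq < hitting_time A T1"
  proof (cases "r1 < 1")
    case False
    then show ?thesis using rqlt r1le unfolding hitting_time_def rq_def[symmetric] r1_def[symmetric] by simp
  next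
    case True
    have tq1: "\<forall>x\<in>A. Tq x x \<noteq> 1" using lt True by force
    have t11: "\<forall>x\<in>A. T1 x x \<noteq> 1" using le1 True by force
    have tr1: "tri f A T1" unfolding T1_def by (rule ea_tri)
    note iq = inv_props[OF fin trq tq1] and i1 = inv_props[OF fin tr1 t11]
    have sq: "spec_rad A (sub_inv_I_minus A Tq) = Max ((\<lambda>x. \<bar>sub_inv_I_minus A Tq x x\<bar>) ` A)"
      using spec_rad_tri[OF fin] iq by blast
    have s1: "spec_rad A (sub_inv_I_minus A T1) = Max ((\<lambda>x. \<bar>sub_inv_I_minus A T1 x x\<bar>) ` A)"
      using spec_rad_tri[OF fin] i1 by blast
    have bound: "\<bar>sub_inv_I_minus A Tq x x\<bar> < 1 / (1 - r1)" if "x \<in> A" for x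
    proof -
      have "0 \<le> Tq x x" "Tq x x < r1" using nnq lt that by auto
      then have "1 / (1 - Tq x x) < 1 / (1 - r1)" using True
        by (simp add: frac_less2)
      moreover have "0 < 1 / (1 - Tq x x)" using \<open>Tq x x < r1\<close> True by simp
      ultimately show ?thesis using iq that by simp
    qed
    have "spec_rad A (sub_inv_I_minus A Tq) < 1 / (1 - r1)"
      using sq bound fin ne by simp
    also have "1 / (1 - r1) \<le> spec_rad A (sub_inv_I_minus A T1)"
    proof -
      have "\<bar>sub_inv_I_minus A T1 x0 x0\<bar> = 1 / (1 - r1)" using i1 x0 True by simp
      moreover have "\<bar>sub_inv_I_minus A T1 x0 x0\<bar> \<le> Max ((\<lambda>x. \<bar>sub_inv_I_minus A T1 x x\<bar>) ` A)"
        using fin x0(1) by simp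
      ultimately show ?thesis using s1 by simp
    qed
    finally have "spec_rad A (sub_inv_I_minus A Tq) < spec_rad A (sub_inv_I_minus A T1)" .
    then show ?thesis using True rqlt unfolding hitting_time_def rq_def[symmetric] r1_def[symmetric] by simp
  qed
  show ?thesis using sd conv hit unfolding A_def Tq_def T1_def T2_def by blast
qed

end
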